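(* In the perishable-goods model described in the context, let $\hat v_1,\hat v_2,\dots$ and $K^*$ be defined as in the context, as functions of the parameters $(c,\lambda,\mu)$. Then for each $k\in\{2,\dots,K^*\}$, the threshold $\hat v_k$ is strictly increasing in $c$, strictly increasing in $\lambda$, and strictly decreasing in $\mu$. The threshold $\hat v_1$ (when $K^*\ge1$) is strictly increasing in $c$, strictly decreasing in $\mu$, and independent of $\lambda$.
   Context: Goods arrive by a Poisson process with rate $\mu>0$, buyers by an independent Poisson process with rate $\lambda>0$, buyer values are i.i.d. from $F$ on $[0,1]$ with density $f>0$, $f$ absolutely continuous, and $J(v)=v-\frac{1-F(v)}{f(v)}$ strictly increasing with $J(0)<0$; $c>0$ is the buyers' per-unit-time waiting cost. Let $\rho(v):=\lambda[1-F(v)]/\mu$. The thresholds (which are the admission thresholds of the revenue-optimal policy, under which a buyer ranked $k$-th in the queue is kept iff his value is at least $\hat v_k$) are defined recursively: $\hat v_1=J^{-1}(c/\mu)$ if $c/\mu<1$ and $\hat v_1=1$ otherwise; for $k\ge2$, if $\hat v_{k-1}<1$ and $\mu\int_{\hat v_{k-1}}^{1}\frac{J'(v)}{1+\rho(v)+\dots+\rho(v)^{k-1}}dv\ge c$, then $\hat v_k$ is the unique $x\in(\hat v_{k-1},1]$ with $\mu\int_{\hat v_{k-1}}^{x}\frac{J'(v)}{1+\rho(v)+\dots+\rho(v)^{k-1}}dv=c$; otherwise $\hat v_k=1$. $K^*$ is the number of indices $k$ with $\hat v_k<1$. Monotonicity in a parameter is understood while the other two parameters are held fixed and on parameter values for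 which the relevant index $k$ satisfies $k\le K^*$. *)

theory Defs
  imports "HOL-Analysis.Analysis"
begin

definition abs_continuous_on_interval :: "real \<Rightarrow> real \<Rightarrow> (real \<Rightarrow> real) \<Rightarrow> bool" where
  "abs_continuous_on_interval a b g \<longleftrightarrow>
     (\<forall>e>0. \<exists>d>0. \<forall>(n::nat) (u::nat \<Rightarrow> real) (v::nat \<Rightarrow> real).
        (\<forall>i<n. a \<le> u i \<and> u i \<le> v i \<and> v i \<le> b) \<and>
        (\<forall>i<n. \<forall>j<n. i \<noteq> j \<longrightarrow> v i \<le> u j \<or> v j \<le> u i) \<and>
        (\<Sum>i<n. v i - u i) < d
        \<longrightarrow> (\<Sum>i<n. \<bar>g (v i) - g (u i)\<bar>) < e)"

definition Jfun :: "(real \<Rightarrow> real) \<Rightarrow> (real \<Rightarrow> real) \<Rightarrow> real \<Rightarrow> real" where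
  "Jfun F f v = v - (1 - F v) / f v"

definition rho :: "(real \<Rightarrow> real) \<Rightarrow> real \<Rightarrow> real \<Rightarrow> real \<Rightarrow> real" where
  "rho F lam mu v = lam * (1 - F v) / mu"

definition Ssum :: "(real \<Rightarrow> real) \<Rightarrow> real \<Rightarrow> real \<Rightarrow> nat \<Rightarrow> real \<Rightarrow> real" where
  "Ssum F lam mu k v = (\<Sum>i<k. (rho F lam mu v) ^ i)"

text \<open>Thresholds hat v_k, k = 1, 2, ...; the arguments are F, f, Jd (= J', the
  a.e. derivative of J), and the parameters c, lambda, mu.  Index 0 is unused
  (set to 1 by convention).\<close>
fun vhat :: "(real \<Rightarrow> real) \<Rightarrow> (real \<Rightarrow> real) \<Rightarrow> (real \<Rightarrow> real) \<Rightarrow> real \<Rightarrow> real \<Rightarrow> real \<Rightarrow> nat \<Rightarrow> real" where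
  "vhat F f Jd c lam mu 0 = 1"
| "vhat F f Jd c lam mu (Suc 0) =
     (if c / mu < 1 then (THE x. x \<in> {0..1} \<and> Jfun F f x = c / mu) else 1)"
| "vhat F f Jd c lam mu (Suc (Suc k)) =
     (let a = vhat F f Jd c lam mu (Suc k);
          h = (\<lambda>v. Jd v / Ssum F lam mu (Suc (Suc k)) v)
      in if a < 1 \<and> mu * integral {a..1} h \<ge> c
         then (THE x. x \<in> {a<..1} \<and> mu * integral {a..x} h = c)
         else 1)"

definition Kstar :: "(real \<Rightarrow> real) \<Rightarrow> (real \<Rightarrow> real) \<Rightarrow> (real \<Rightarrow> real) \<Rightarrow> real \<Rightarrow> real \<Rightarrow> real \<Rightarrow> nat" where
  "Kstar F f Jd c lam mu = card {k. 1 \<le> k \<and> vhat F f Jd c lam mu k < 1}"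

end

theory Submission
  imports Defs
begin

lemma interval_D:
  assumes "K \<subseteq> cbox (0::real) 1" "K = cbox c d" "interior K \<noteq> {}"
  shows "K = {c..d} \<and> 0 \<le> c \<and> c < d \<and> d \<le> 1"
proof -
  have K: "K = {c..d}" using assms(2) by simp
  have "c < d" using assms(3) K by (auto simp: interior_atLeastAtMost_real)
  then show ?thesis using assms(1) K by auto
qed

lemma nonoverlap_real:
  fixes c1 d1 c2 d2 :: real
  assumes "c1 < d1" "c2 < d2" "{c1<..<d1} \<inter> {c2<..<d2} = {}"
  shows "d1 \<le> c2 \<or> d2 \<le> c1"
proof (rule ccontr)
  assume "\<not> ?thesis"
  then have "(max c1 c2 + min d1 d2)/2 \<in> {c1<..<d1} \<inter> {c2<..<d2}"
    using assms by auto
  then show False using assms(3) by blast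
qed

lemma acE:
  assumes "abs_continuous_on_interval a b g" "e > 0"
  obtains d where "d > 0" "\<And>(n::nat) (u::nat \<Rightarrow> real) (v::nat \<Rightarrow> real). (\<forall>i<n. a \<le> u i \<and> u i \<le> v i \<and> v i \<le> b) \<Longrightarrow>
        (\<forall>i<n. \<forall>j<n. i \<noteq> j \<longrightarrow> v i \<le> u j \<or> v j \<le> u i) \<Longrightarrow>
        (\<Sum>i<n. v i - u i) < d \<Longrightarrow> (\<Sum>i<n. \<bar>g (v i) - g (u i)\<bar>) < e"
proof -
  have "\<exists>d>0. \<forall>(n::nat) (u::nat \<Rightarrow> real) (v::nat \<Rightarrow> real).
        (\<forall>i<n. a \<le> u i \<and> u i \<le> v i \<and> v i \<le> b) \<and>
        (\<forall>i<n. \<forall>j<n. i \<noteq> j \<longrightarrow> v i \<le> u j \<or> v j \<le> u i) \<and>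
        (\<Sum>i<n. v i - u i) < d
        \<longrightarrow> (\<Sum>i<n. \<bar>g (v i) - g (u i)\<bar>) < e"
    using assms unfolding abs_continuous_on_interval_def by simp
  then obtain d where d: "d > 0" and P: "\<forall>(n::nat) (u::nat \<Rightarrow> real) (v::nat \<Rightarrow> real).
        (\<forall>i<n. a \<le> u i \<and> u i \<le> v i \<and> v i \<le> b) \<and>
        (\<forall>i<n. \<forall>j<n. i \<noteq> j \<longrightarrow> v i \<le> u j \<or> v j \<le> u i) \<and>
        (\<Sum>i<n. v i - u i) < d
        \<longrightarrow> (\<Sum>i<n. \<bar>g (v i) - g (u i)\<bar>) < e" by (elim exE conjE)
  show ?thesis
  proof (rule that[OF d])
    fix n :: nat and u v :: "nat \<Rightarrow> real" assume "(\<forall>i<n. a \<le> u i \<and> u i \<le> v i \<and> v i \<le> b)"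
        "(\<forall>i<n. \<forall>j<n. i \<noteq> j \<longrightarrow> v i \<le> u j \<or> v j \<le> u i)"
        "(\<Sum>i<n. v i - u i) < d"
    then show "(\<Sum>i<n. \<bar>g (v i) - g (u i)\<bar>) < e" using P[rule_format, of n u v] by blast
  qed
qed

lemma nprop:
  fixes g :: "real \<Rightarrow> real"
  assumes ac: "abs_continuous_on_interval 0 1 g" and mono: "mono_on {0..1} g"
    and NS: "N \<subseteq> {0..1}" and Nneg: "negligible N"
  shows "negligible (g ` N)"
  unfolding negligible_outer_le
proof (intro allI impI)
  fix e :: real assume "e > 0"
  show "\<exists>T. g ` N \<subseteq> T \<and> T \<in> lmeasurable \<and> measure lebesgue T \<le> e"
  proof (rule acE[OF ac \<open>e>0\<close>])
  fix d :: real
  assume "d > 0" and dP: "\<And>(n::nat) (u::nat \<Rightarrow> real) (v::nat \<Rightarrow> real). (\<forall>i<n. 0 \<le> u i \<and> u i \<le> v i \<and> v i \<le> 1) \<Longrightarrow>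
        (\<forall>i<n. \<forall>j<n. i \<noteq> j \<longrightarrow> v i \<le> u j \<or> v j \<le> u i) \<Longrightarrow>
        (\<Sum>i<n. v i - u i) < d \<Longrightarrow> (\<Sum>i<n. \<bar>g (v i) - g (u i)\<bar>) < e"
  have Nm: "N \<in> lmeasurable" using Nneg by (rule negligible_imp_measurable)
  have N0: "measure lebesgue N = 0" using Nneg by (simp add: negligible_imp_measure0)
  have Nc: "N \<subseteq> cbox 0 1" using NS by simp
  have d2: "d/2 > 0" using \<open>d > 0\<close> by simp
  show "\<exists>T. g ` N \<subseteq> T \<and> T \<in> lmeasurable \<and> measure lebesgue T \<le> e"
  proof (rule measurable_outer_intervals_bounded[OF Nm Nc d2])
    fix \<D> :: "real set set"
    assume cD: "countable \<D>"
    and DK: "\<And>K. K \<in> \<D> \<Longrightarrow> K \<subseteq> cbox 0 1 \<and> K \<noteq> {} \<and> (\<exists>c d. K = cbox c d)"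
    and Dpw: "pairwise (\<lambda>A B. interior A \<inter> interior B = {}) \<D>"
    and "\<And>u v. cbox u v \<in> \<D> \<Longrightarrow> \<exists>n. \<forall>i \<in> Basis. v \<bullet> i - u \<bullet> i = ((1::real) \<bullet> i - (0::real) \<bullet> i)/2^n"
    and Dint: "\<And>K. \<lbrakk>K \<in> \<D>; box (0::real) 1 \<noteq> {}\<rbrakk> \<Longrightarrow> interior K \<noteq> {}"
    and Dcov: "N \<subseteq> \<Union>\<D>" and Dm: "\<Union>\<D> \<in> lmeasurable"
    and Dmeas: "measure lebesgue (\<Union>\<D>) \<le> measure lebesgue N + d/2"
  have box01: "box (0::real) 1 \<noteq> {}" by simp
  have KD: "0 \<le> Inf K \<and> Inf K < Sup K \<and> Sup K \<le> 1" if KD0: "K \<in> \<D>" for K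
  proof -
    obtain c d where "K = cbox c d" using DK[OF KD0] by blast
    then have "K = {c..d} \<and> 0 \<le> c \<and> c < d \<and> d \<le> 1"
      using interval_D DK[OF KD0] Dint[OF KD0 box01] by blast
    then show ?thesis by auto
  qed
  have KE: "K = {Inf K..Sup K}" if KD0: "K \<in> \<D>" for K
  proof -
    obtain c d where "K = cbox c d" using DK[OF KD0] by blast
    then have "K = {c..d} \<and> 0 \<le> c \<and> c < d \<and> d \<le> 1"
      using interval_D DK[OF KD0] Dint[OF KD0 box01] by blast
    then show ?thesis by auto
  qed
  have Kmem: "x \<in> K \<longleftrightarrow> Inf K \<le> x \<and> x \<le> Sup K" if "K \<in> \<D>" for K x
    using KE[OF that] by (metis atLeastAtMost_iff)
  have Kint: "interior K = {Inf K<..<Sup K}" if "K \<in> \<D>" for K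
    using KE[OF that] by (metis interior_atLeastAtMost_real)
  have mK: "measure lebesgue K = Sup K - Inf K" if "K \<in> \<D>" for K
  proof -
    have "measure lebesgue {Inf K..Sup K} = Sup K - Inf K" using KD[OF that] by simp
    then show ?thesis using KE[OF that] by metis
  qed
  have Klm: "K \<in> lmeasurable" if "K \<in> \<D>" for K
    using KE[OF that] by (metis lmeasurable_cbox cbox_interval)
  have gmono: "g (Inf K) \<le> g (Sup K)" if "K \<in> \<D>" for K
    using KD[OF that] by (intro mono_onD[OF mono]) auto
  have disj: "Sup K \<le> Inf L \<or> Sup L \<le> Inf K" if "K \<in> \<D>" "L \<in> \<D>" "K \<noteq> L" for K L
  proof -
    have "interior K \<inter> interior L = {}" using Dpw that by (auto simp: pairwise_def)
    then have "{Inf K<..<Sup K} \<inter> {Inf L<..<Sup L} = {}" using Kint that by simp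
    then show ?thesis using nonoverlap_real KD that by blast
  qed
  define A where "A K = {g (Inf K)..g (Sup K)}" for K
  have sub: "g ` N \<subseteq> (\<Union>K\<in>\<D>. A K)"
  proof
    fix y assume "y \<in> g ` N"
    then obtain x where x: "x \<in> N" "y = g x" by auto
    then obtain K where K: "K \<in> \<D>" "x \<in> K" using Dcov by auto
    have "Inf K \<le> x" "x \<le> Sup K" using Kmem[OF K(1)] K(2) by auto
    moreover have "x \<in> {0..1}" using x NS by auto
    moreover have "Inf K \<in> {0..1}" "Sup K \<in> {0..1}" using KD[OF K(1)] by auto
    ultimately have "g (Inf K) \<le> g x" "g x \<le> g (Sup K)"
      by (auto intro!: mono_onD[OF mono])
    then show "y \<in> (\<Union>K\<in>\<D>. A K)" using K x by (auto simp: A_def)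
  qed
  have bound: "measure lebesgue (\<Union>K\<in>I. A K) \<le> e" if I: "I \<subseteq> \<D>" "finite I" for I
  proof -
    have "measure lebesgue (\<Union>K\<in>I. A K) \<le> (\<Sum>K\<in>I. measure lebesgue (A K))"
      by (rule measure_UNION_le) (auto simp: A_def \<open>finite I\<close>)
    also have "\<dots> = (\<Sum>K\<in>I. g (Sup K) - g (Inf K))"
    proof (rule sum.cong[OF refl])
      fix K assume "K \<in> I"
      then have "g (Inf K) \<le> g (Sup K)" using gmono I by blast
      then show "measure lebesgue (A K) = g (Sup K) - g (Inf K)" by (simp add: A_def)
    qed
    also have "\<dots> < e"
    proof -
      obtain h where h: "bij_betw h {0..<card I} I" using ex_bij_betw_nat_finite[OF \<open>finite I\<close>] by blast
      define n where "n = card I"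
      define u where "u i = Inf (h i)" for i
      define v where "v i = Sup (h i)" for i
      have hI: "h i \<in> \<D>" if "i < n" for i using h that I by (auto simp: n_def bij_betw_def)
      have hinj: "h i \<noteq> h j" if "i < n" "j < n" "i \<noteq> j" for i j
        using h that by (auto simp: n_def bij_betw_def inj_on_def)
      have c1: "\<forall>i<n. 0 \<le> u i \<and> u i \<le> v i \<and> v i \<le> 1"
      proof (intro allI impI)
        fix i assume "i < n"
        from KD[OF hI[OF this]] show "0 \<le> u i \<and> u i \<le> v i \<and> v i \<le> 1" by (simp add: u_def v_def)
      qed
      have c2: "\<forall>i<n. \<forall>j<n. i \<noteq> j \<longrightarrow> v i \<le> u j \<or> v j \<le> u i"
        using disj hI hinj by (simp add: u_def v_def)
      have reidx: "(\<Sum>i<n. G (h i)) = (\<Sum>K\<in>I. G K)" for G :: "real set \<Rightarrow> real"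
        using sum.reindex_bij_betw[OF h, of G] by (simp add: n_def lessThan_atLeast0)
      have "(\<Sum>i<n. v i - u i) = (\<Sum>K\<in>I. Sup K - Inf K)"
        using reidx[of "\<lambda>K. Sup K - Inf K"] by (simp add: u_def v_def)
      also have "\<dots> = (\<Sum>K\<in>I. measure lebesgue K)"
        using mK I by (intro sum.cong) auto
      also have "\<dots> = measure lebesgue (\<Union>I)"
      proof (rule measure_negligible_finite_Union[symmetric, OF \<open>finite I\<close>])
        show "\<And>S. S \<in> I \<Longrightarrow> S \<in> lmeasurable" using Klm I by blast
        show "pairwise (\<lambda>S T. negligible (S \<inter> T)) I"
        proof (clarsimp simp only: pairwise_def)
          fix S T assume ST: "S \<in> I" "T \<in> I" "S \<noteq> T"
          then have SD: "S \<in> \<D>" "T \<in> \<D>" using I by auto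
          have "S \<inter> T \<subseteq> {Sup S, Sup T}"
          proof
            fix x assume "x \<in> S \<inter> T"
            then have "Inf S \<le> x" "x \<le> Sup S" "Inf T \<le> x" "x \<le> Sup T" using Kmem SD by auto
            then show "x \<in> {Sup S, Sup T}" using disj[OF SD ST(3)] by auto
          qed
          then show "negligible (S \<inter> T)"
            by (meson negligible_insert negligible_empty negligible_subset)
        qed
      qed
      also have "\<dots> \<le> measure lebesgue (\<Union>\<D>)"
      proof (rule measure_mono_fmeasurable[OF _ _ Dm])
        show "\<Union>I \<subseteq> \<Union>\<D>" using I by auto
        show "\<Union>I \<in> sets lebesgue" using Klm I \<open>finite I\<close> by (auto intro!: sets.finite_Union fmeasurableD)
      qed
      also have "\<dots> < d" using Dmeas N0 \<open>d > 0\<close> by simp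
      finally have "(\<Sum>i<n. \<bar>g (v i) - g (u i)\<bar>) < e" using dP[OF c1 c2] by blast
      moreover have "(\<Sum>i<n. \<bar>g (v i) - g (u i)\<bar>) = (\<Sum>K\<in>I. g (Sup K) - g (Inf K))"
      proof -
        have "(\<Sum>i<n. \<bar>g (v i) - g (u i)\<bar>) = (\<Sum>i<n. g (v i) - g (u i))"
          using gmono hI by (intro sum.cong) (auto simp: u_def v_def)
        then show ?thesis using reidx[of "\<lambda>K. g (Sup K) - g (Inf K)"] by (simp add: u_def v_def)
      qed
      ultimately show ?thesis by simp
    qed
    finally show ?thesis by simp
  qed
  have "(\<Union>K\<in>\<D>. A K) \<in> lmeasurable" "measure lebesgue (\<Union>K\<in>\<D>. A K) \<le> e"
    using fmeasurable_UN_bound[OF cD _ bound] measure_UN_bound[OF cD _ bound]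
    by (auto simp: A_def)
  then show "\<exists>T. g ` N \<subseteq> T \<and> T \<in> lmeasurable \<and> measure lebesgue T \<le> e"
    using sub by blast
  qed
  qed
qed

lemma integral_nonneg_ae:
  fixes f :: "real \<Rightarrow> real"
  assumes "f integrable_on S" "negligible N" "\<And>x. x \<in> S - N \<Longrightarrow> 0 \<le> f x"
  shows "0 \<le> integral S f"
proof -
  define g where "g x = (if x \<in> N then 0 else f x)" for x
  have "g integrable_on S" using integrable_spike[OF assms(1) assms(2)] by (auto simp: g_def)
  moreover have "integral S f = integral S g"
    using integral_spike[OF assms(2), of S g f] by (auto simp: g_def)
  moreover have "\<And>x. x \<in> S \<Longrightarrow> 0 \<le> g x" using assms(3) by (auto simp: g_def)
  ultimately show ?thesis using integral_nonneg by metis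
qed

locale pm =
  fixes F f Jd :: "real \<Rightarrow> real"
  assumes F0: "F 0 = 0" and F1: "F 1 = 1"
    and dens: "\<forall>x\<in>{0..1}. (F has_real_derivative f x) (at x within {0..1})"
    and fpos: "\<forall>x\<in>{0..1}. f x > 0"
    and fac: "abs_continuous_on_interval 0 1 f"
    and Jmono: "strict_mono_on {0..1} (Jfun F f)"
    and J0: "Jfun F f 0 < 0"
    and Jd: "AE x in lborel. x \<in> {0..1} \<longrightarrow> (Jfun F f has_real_derivative Jd x) (at x)"
begin

lemma f_cont: "continuous_on {0..1} f"
  unfolding continuous_on_iff
proof (intro ballI allI impI)
  fix x e :: real assume x: "x \<in> {0..1}" and e: "e > 0"
  show "\<exists>d>0. \<forall>x'\<in>{0..1}. dist x' x < d \<longrightarrow> dist (f x') (f x) < e"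
  proof (rule acE[OF fac e])
    fix d :: real
    assume "d > 0" and dP: "\<And>(n::nat) (u::nat \<Rightarrow> real) (v::nat \<Rightarrow> real). (\<forall>i<n. 0 \<le> u i \<and> u i \<le> v i \<and> v i \<le> 1) \<Longrightarrow>
        (\<forall>i<n. \<forall>j<n. i \<noteq> j \<longrightarrow> v i \<le> u j \<or> v j \<le> u i) \<Longrightarrow>
        (\<Sum>i<n. v i - u i) < d \<Longrightarrow> (\<Sum>i<n. \<bar>f (v i) - f (u i)\<bar>) < e"
    show ?thesis
    proof (intro exI[of _ d] conjI ballI impI)
      show "d > 0" by fact
      fix y assume y: "y \<in> {0..1}" "dist y x < d"
      have "(\<Sum>i<Suc 0. \<bar>f ((\<lambda>_. max x y) i) - f ((\<lambda>_. min x y) i)\<bar>) < e"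
        using dP[of "Suc 0" "\<lambda>_. min x y" "\<lambda>_. max x y"] x y by (auto simp: dist_real_def)
      then show "dist (f y) (f x) < e"
        by (cases "x \<le> y") (auto simp: dist_real_def max_def min_def abs_minus_commute)
    qed
  qed
qed

lemma F_cont: "continuous_on {0..1} F"
  unfolding continuous_on_eq_continuous_within using dens DERIV_continuous by blast

lemma F_deriv_at: assumes "0 < x" "x < 1" shows "(F has_real_derivative f x) (at x)"
proof -
  have "(F has_real_derivative f x) (at x within {0..1})" using dens assms by simp
  then show ?thesis using at_within_Icc_at[of 0 x 1] assms by simp
qed

lemma F_strict: assumes "0 \<le> x" "x < y" "y \<le> 1" shows "F x < F y"
proof (rule DERIV_pos_imp_increasing_open[OF assms(2)])
  fix z assume "x < z" "z < y"
  then show "\<exists>d. (F has_real_derivative d) (at z) \<and> 0 < d"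
    using F_deriv_at fpos assms by (intro exI[of _ "f z"]) auto
next
  show "continuous_on {x..y} F" by (rule continuous_on_subset[OF F_cont]) (use assms in auto)
qed

lemma F_le1: "x \<in> {0..1} \<Longrightarrow> F x \<le> 1"
  using F_strict[of x 1] F1 by (cases "x = 1") auto

lemma F_ge0: "x \<in> {0..1} \<Longrightarrow> 0 \<le> F x"
  using F_strict[of 0 x] F0 by (cases "x = 0") auto

lemma F_lt1: "0 \<le> x \<Longrightarrow> x < 1 \<Longrightarrow> F x < 1"
  using F_strict[of x 1] F1 by auto

lemma f_bounds: obtains m M where "m > 0" "\<And>x. x \<in> {0..1} \<Longrightarrow> m \<le> f x \<and> f x \<le> M"
proof -
  obtain a where a: "a \<in> {0..1}" "\<forall>y\<in>{0..1}. f a \<le> f y"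
    using continuous_attains_inf[OF compact_Icc _ f_cont] by auto
  obtain b where b: "b \<in> {0..1}" "\<forall>y\<in>{0..1}. f y \<le> f b"
    using continuous_attains_sup[OF compact_Icc _ f_cont] by auto
  show ?thesis using a b fpos by (intro that[of "f a" "f b"]) auto
qed

lemma F_lip:
  assumes "x \<in> {0..1}" "y \<in> {0..1}" "\<And>z. z \<in> {0..1} \<Longrightarrow> f z \<le> M"
  shows "\<bar>F y - F x\<bar> \<le> M * \<bar>y - x\<bar>"
proof -
  have *: "\<bar>F b - F a\<bar> \<le> M * \<bar>b - a\<bar>" if ab: "a \<in> {0..1}" "b \<in> {0..1}" "a < b" for a b
  proof -
    have "continuous_on {a..b} F" by (rule continuous_on_subset[OF F_cont]) (use ab in auto)
    moreover have "\<And>z. a < z \<Longrightarrow> z < b \<Longrightarrow> F differentiable at z"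
    proof -
      fix z assume "a < z" "z < b"
      then have "(F has_real_derivative f z) (at z)" using ab by (intro F_deriv_at) auto
      then show "F differentiable at z" using real_differentiable_def by blast
    qed
    ultimately have "\<exists>l z. a < z \<and> z < b \<and> (F has_real_derivative l) (at z) \<and> F b - F a = (b - a) * l"
      by (rule MVT[OF ab(3)])
    then obtain l z where z: "a < z" "z < b" "(F has_real_derivative l) (at z)" "F b - F a = (b - a) * l"
      by blast
    have "l = f z" using DERIV_unique[OF z(3) F_deriv_at] z ab by auto
    moreover have "f z > 0" using fpos z ab by auto
    ultimately have "\<bar>F b - F a\<bar> = (b - a) * f z" using z ab by (simp add: abs_mult)
    also have "\<dots> \<le> (b - a) * M" using assms(3)[of z] z ab by (intro mult_left_mono) auto
    finally show ?thesis using ab by (simp add: mult.commute)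
  qed
  consider "x < y" | "x = y" | "y < x" by linarith
  then show ?thesis
  proof cases
    case 1 then show ?thesis using *[of x y] assms by simp
  next
    case 2 then show ?thesis by simp
  next
    case 3 then show ?thesis using *[of y x] assms by (simp add: abs_minus_commute)
  qed
qed

end

context pm begin

lemma J_diff:
  assumes x: "x \<in> {0..1}" and y: "y \<in> {0..1}" and m: "m > 0" and mM: "\<And>z. z \<in> {0..1} \<Longrightarrow> m \<le> f z \<and> f z \<le> M"
  shows "\<bar>Jfun F f y - Jfun F f x\<bar> \<le> (1 + M / m) * \<bar>y - x\<bar> + (1 / m^2) * \<bar>f y - f x\<bar>"
proof -
  have fx: "m \<le> f x" "f x > 0" and fy: "m \<le> f y" "f y > 0" using mM[OF x] mM[OF y] m by auto
  have Fx: "0 \<le> 1 - F x" "1 - F x \<le> 1" using F_ge0[OF x] F_le1[OF x] by auto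
  have eq: "Jfun F f y - Jfun F f x = (y - x) - ((F x - F y) / f y + (1 - F x) * (1 / f y - 1 / f x))"
    unfolding Jfun_def using fx fy by (simp add: field_simps)
  have t1: "\<bar>(F x - F y) / f y\<bar> \<le> M / m * \<bar>y - x\<bar>"
  proof -
    have "\<bar>F x - F y\<bar> \<le> M * \<bar>y - x\<bar>" using F_lip[OF y x, of M] mM by (simp add: abs_minus_commute)
    have "\<bar>(F x - F y) / f y\<bar> = \<bar>F x - F y\<bar> / f y" using fy by simp
    also have "\<dots> \<le> \<bar>F x - F y\<bar> / m"
      using fy m by (intro divide_left_mono) auto
    also have "\<dots> \<le> M * \<bar>y - x\<bar> / m" using \<open>\<bar>F x - F y\<bar> \<le> M * \<bar>y - x\<bar>\<close> m by (intro divide_right_mono) auto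
    also have "\<dots> = M / m * \<bar>y - x\<bar>" by simp
    finally show ?thesis .
  qed
  have t2: "\<bar>(1 - F x) * (1 / f y - 1 / f x)\<bar> \<le> 1 / m^2 * \<bar>f y - f x\<bar>"
  proof -
    have "\<bar>1 / f y - 1 / f x\<bar> = \<bar>f y - f x\<bar> / (f x * f y)" using fx fy
      by (simp add: field_simps abs_minus_commute)
    also have "\<dots> \<le> \<bar>f y - f x\<bar> / m^2"
    proof (rule divide_left_mono)
      show "m^2 \<le> f x * f y" using fx fy m by (simp add: power2_eq_square mult_mono)
    qed (use m fx fy in auto)
    finally have a: "\<bar>1 / f y - 1 / f x\<bar> \<le> \<bar>f y - f x\<bar> / m^2" .
    have "\<bar>(1 - F x) * (1 / f y - 1 / f x)\<bar> = (1 - F x) * \<bar>1 / f y - 1 / f x\<bar>"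
      using Fx by (simp add: abs_mult)
    also have "\<dots> \<le> 1 * \<bar>1 / f y - 1 / f x\<bar>" using Fx by (intro mult_right_mono) auto
    finally show ?thesis using a by simp
  qed
  define P where "P = (F x - F y) / f y"
  define Q where "Q = (1 - F x) * (1 / f y - 1 / f x)"
  have tri: "\<bar>(y - x) - (P + Q)\<bar> \<le> \<bar>y - x\<bar> + \<bar>P\<bar> + \<bar>Q\<bar>"
    using abs_triangle_ineq4[of "y - x" "P + Q"] abs_triangle_ineq[of P Q] by linarith
  have "(1 + M / m) * \<bar>y - x\<bar> = \<bar>y - x\<bar> + M / m * \<bar>y - x\<bar>" by (simp add: algebra_simps)
  then show ?thesis unfolding eq using t1 t2 tri by (simp only: P_def[symmetric] Q_def[symmetric])
qed

lemma J_ac: "abs_continuous_on_interval 0 1 (Jfun F f)"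
proof -
  obtain m M where m: "m > 0" and mM: "\<And>x. x \<in> {0..1} \<Longrightarrow> m \<le> f x \<and> f x \<le> M"
    using f_bounds by blast
  have M0: "M \<ge> 0" using mM[of 0] m by auto
  define A where "A = 1 + M / m"
  define B where "B = 1 / m^2"
  have A0: "A \<ge> 0" and B0: "B \<ge> 0" using m M0 by (auto simp: A_def B_def)
  show ?thesis unfolding abs_continuous_on_interval_def
  proof (intro allI impI)
    fix e :: real assume e: "e > 0"
    have eB: "e / (2 * (B + 1)) > 0" using e B0 by simp
    show "\<exists>d>0. \<forall>(n::nat) (u::nat \<Rightarrow> real) (v::nat \<Rightarrow> real).
        (\<forall>i<n. 0 \<le> u i \<and> u i \<le> v i \<and> v i \<le> 1) \<and>
        (\<forall>i<n. \<forall>j<n. i \<noteq> j \<longrightarrow> v i \<le> u j \<or> v j \<le> u i) \<and>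
        (\<Sum>i<n. v i - u i) < d
        \<longrightarrow> (\<Sum>i<n. \<bar>Jfun F f (v i) - Jfun F f (u i)\<bar>) < e"
    proof (rule acE[OF fac eB])
      fix d :: real
      assume "d > 0" and dP: "\<And>(n::nat) (u::nat \<Rightarrow> real) (v::nat \<Rightarrow> real). (\<forall>i<n. 0 \<le> u i \<and> u i \<le> v i \<and> v i \<le> 1) \<Longrightarrow>
        (\<forall>i<n. \<forall>j<n. i \<noteq> j \<longrightarrow> v i \<le> u j \<or> v j \<le> u i) \<Longrightarrow>
        (\<Sum>i<n. v i - u i) < d \<Longrightarrow> (\<Sum>i<n. \<bar>f (v i) - f (u i)\<bar>) < e / (2 * (B + 1))"
      define d' where "d' = min d (e / (2 * (A + 1)))"
      have "d' > 0" using \<open>d > 0\<close> e A0 by (simp add: d'_def)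
      show ?thesis
      proof (intro exI[of _ d'] conjI allI impI)
        show "d' > 0" by fact
        fix n :: nat and u v :: "nat \<Rightarrow> real"
        assume H: "(\<forall>i<n. 0 \<le> u i \<and> u i \<le> v i \<and> v i \<le> 1) \<and>
          (\<forall>i<n. \<forall>j<n. i \<noteq> j \<longrightarrow> v i \<le> u j \<or> v j \<le> u i) \<and> (\<Sum>i<n. v i - u i) < d'"
        then have H1: "\<forall>i<n. 0 \<le> u i \<and> u i \<le> v i \<and> v i \<le> 1"
          and H2: "\<forall>i<n. \<forall>j<n. i \<noteq> j \<longrightarrow> v i \<le> u j \<or> v j \<le> u i"
          and H3: "(\<Sum>i<n. v i - u i) < d'" by auto
        have S1: "(\<Sum>i<n. \<bar>f (v i) - f (u i)\<bar>) < e / (2 * (B + 1))"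
          using dP[OF H1 H2] H3 by (simp add: d'_def)
        have S2: "(\<Sum>i<n. v i - u i) < e / (2 * (A + 1))" using H3 by (simp add: d'_def)
        have "(\<Sum>i<n. \<bar>Jfun F f (v i) - Jfun F f (u i)\<bar>)
              \<le> (\<Sum>i<n. A * (v i - u i) + B * \<bar>f (v i) - f (u i)\<bar>)"
        proof (rule sum_mono)
          fix i assume "i \<in> {..<n}"
          then have "u i \<in> {0..1}" "v i \<in> {0..1}" "u i \<le> v i" using H1 by auto
          then show "\<bar>Jfun F f (v i) - Jfun F f (u i)\<bar> \<le> A * (v i - u i) + B * \<bar>f (v i) - f (u i)\<bar>"
            using J_diff[of "u i" "v i" m M] m mM by (simp add: A_def B_def)
        qed
        also have "\<dots> = A * (\<Sum>i<n. v i - u i) + B * (\<Sum>i<n. \<bar>f (v i) - f (u i)\<bar>)"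
          by (simp add: sum.distrib sum_distrib_left)
        also have "\<dots> \<le> A * (e / (2 * (A + 1))) + B * (e / (2 * (B + 1)))"
          using S1 S2 A0 B0 by (intro add_mono mult_left_mono) auto
        also have "\<dots> < e"
        proof -
          have "A * (e / (2 * (A + 1))) < e / 2" using A0 e by (simp add: field_simps)
          moreover have "B * (e / (2 * (B + 1))) < e / 2" using B0 e by (simp add: field_simps)
          ultimately show ?thesis by linarith
        qed
        finally show "(\<Sum>i<n. \<bar>Jfun F f (v i) - Jfun F f (u i)\<bar>) < e" .
      qed
    qed
  qed
qed

end

context pm begin

lemma J_eq: "Jfun F f = (\<lambda>v. v - (1 - F v) / f v)"
  by (rule ext) (simp add: Jfun_def)

lemma J_cont: "continuous_on {0..1} (Jfun F f)"
  unfolding J_eq using fpos by (intro continuous_intros F_cont f_cont) auto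

lemma J1: "Jfun F f 1 = 1"
  using F1 fpos by (simp add: Jfun_def)

lemma J_mono: "mono_on {0..1} (Jfun F f)"
  using Jmono by (rule strict_mono_on_imp_mono_on)

lemma J_less: "x \<in> {0..1} \<Longrightarrow> y \<in> {0..1} \<Longrightarrow> x < y \<Longrightarrow> Jfun F f x < Jfun F f y"
  using Jmono by (auto simp: strict_mono_on_def)

lemma J_less_iff: "x \<in> {0..1} \<Longrightarrow> y \<in> {0..1} \<Longrightarrow> Jfun F f x < Jfun F f y \<longleftrightarrow> x < y"
  using J_less[of x y] J_less[of y x] by (cases x y rule: linorder_cases) auto

lemma Jd_ae: obtains N where "negligible N"
  "\<And>x. x \<in> {0..1} \<Longrightarrow> x \<notin> N \<Longrightarrow> (Jfun F f has_real_derivative Jd x) (at x)"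
proof -
  from Jd show ?thesis
  proof (rule AE_E)
    fix N assume N: "{x \<in> space lborel. \<not> (x \<in> {0..1} \<longrightarrow> (Jfun F f has_real_derivative Jd x) (at x))} \<subseteq> N"
      "emeasure lborel N = 0" "N \<in> sets lborel"
    have "N \<in> null_sets lborel" using N by auto
    then have "negligible N" by (simp add: negligible_iff_null_sets null_sets_completionI)
    moreover have "\<And>x. x \<in> {0..1} \<Longrightarrow> x \<notin> N \<Longrightarrow> (Jfun F f has_real_derivative Jd x) (at x)"
      using N(1) by auto
    ultimately show ?thesis by (rule that)
  qed
qed

lemma Jd_nonneg:
  assumes x: "0 < x" "x < 1" and D: "(Jfun F f has_real_derivative D) (at x)"
  shows "0 \<le> D"
proof (rule ccontr)
  assume "\<not> 0 \<le> D"
  then have "D < 0" by simp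
  from DERIV_neg_dec_right[OF D this] obtain d where d: "d > 0" "\<And>h. h > 0 \<Longrightarrow> h < d \<Longrightarrow> Jfun F f (x + h) < Jfun F f x"
    by blast
  define h where "h = min (d/2) ((1 - x)/2)"
  have h1: "h \<le> (1 - x)/2" "h \<le> d/2" unfolding h_def by (rule min.cobounded2, rule min.cobounded1)
  have h: "h > 0" "h < d" "x + h \<le> 1" using d x h1 by (auto simp: h_def)
  have "Jfun F f x < Jfun F f (x + h)" using h x by (intro J_less) auto
  with d(2)[OF h(1,2)] show False by simp
qed

lemma FTC:
  assumes ab: "0 \<le> a" "a \<le> b" "b \<le> 1"
  shows "Jd absolutely_integrable_on {a..b} \<and> integral {a..b} Jd = Jfun F f b - Jfun F f a"
proof -
  let ?J = "Jfun F f"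
  obtain N where Nneg: "negligible N"
    and Nder: "\<And>x. x \<in> {0..1} \<Longrightarrow> x \<notin> N \<Longrightarrow> (?J has_real_derivative Jd x) (at x)"
    using Jd_ae by blast
  define S where "S = {a<..<b} - N"
  have Sl: "S \<in> sets lebesgue"
    using sets.Diff[of "{a<..<b}" lebesgue N] negligible_imp_sets[OF Nneg] by (simp add: S_def)
  have Ssub: "S \<subseteq> {a..b}" by (auto simp: S_def)
  have S01: "x \<in> {0..1}" if "x \<in> S" for x using that ab by (auto simp: S_def)
  have Sder: "(?J has_field_derivative Jd x) (at x within S)" if "x \<in> S" for x
    using Nder[OF S01[OF that]] that by (auto simp: S_def intro: has_field_derivative_at_within)
  have inj: "inj_on ?J S"
    using strict_mono_on_imp_inj_on[OF Jmono] inj_on_subset S01 by blast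
  have nonneg: "0 \<le> Jd x" if "x \<in> S" for x
    using Jd_nonneg[OF _ _ Nder[OF S01[OF that]]] that ab by (auto simp: S_def)
  have JSsub: "?J ` S \<subseteq> {?J a..?J b}"
  proof
    fix y assume "y \<in> ?J ` S"
    then obtain x where x: "x \<in> S" "y = ?J x" by auto
    then have "a \<le> x" "x \<le> b" by (auto simp: S_def)
    then show "y \<in> {?J a..?J b}" using x ab by (auto intro!: mono_onD[OF J_mono])
  qed
  have "?J differentiable_on S"
    unfolding differentiable_on_def using Sder real_differentiable_def by blast
  then have JSl: "?J ` S \<in> sets lebesgue" by (intro differentiable_image_in_sets_lebesgue[OF Sl]) auto
  have JSlm: "?J ` S \<in> lmeasurable"
    by (rule bounded_set_imp_lmeasurable[OF bounded_subset[OF bounded_closed_interval JSsub] JSl])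
  have "(\<lambda>_. 1::real) absolutely_integrable_on ?J ` S \<and> integral (?J ` S) (\<lambda>_. 1::real) = measure lebesgue (?J ` S)"
    using nonnegative_absolutely_integrable_1[OF integrable_on_const[OF JSlm]] lmeasure_integral[OF JSlm] by auto
  then have LHS: "(\<lambda>x. \<bar>Jd x\<bar> * 1) absolutely_integrable_on S \<and> integral S (\<lambda>x. \<bar>Jd x\<bar> * 1) = measure lebesgue (?J ` S)"
    using has_absolute_integral_change_of_variables_1'[OF Sl Sder inj, of "\<lambda>_. 1" "measure lebesgue (?J ` S)"] by blast
  have absS: "Jd absolutely_integrable_on S"
    using absolutely_integrable_spike[OF conjunct1[OF LHS] negligible_empty, of Jd] nonneg by auto
  have intS: "integral S Jd = measure lebesgue (?J ` S)"
    using conjunct2[OF LHS] nonneg by (metis (no_types, lifting) abs_of_nonneg integral_cong mult.right_neutral)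
  have "{x \<in> S - {a..b}. Jd x \<noteq> 0} = {}" using Ssub by auto
  then have negl1: "negligible {x \<in> S - {a..b}. Jd x \<noteq> 0}" by (metis negligible_empty)
  have negl2: "negligible {x \<in> {a..b} - S. Jd x \<noteq> 0}"
  proof (rule negligible_subset)
    show "negligible (N \<union> {a, b})" using Nneg by auto
    show "{x \<in> {a..b} - S. Jd x \<noteq> 0} \<subseteq> N \<union> {a, b}" by (auto simp: S_def)
  qed
  have absI: "Jd absolutely_integrable_on {a..b}"
    by (rule absolutely_integrable_spike_set[OF absS negl1 negl2])
  have intI: "integral {a..b} Jd = measure lebesgue (?J ` S)"
    using integral_spike_set[OF negl1 negl2] intS by simp
  have Jab: "?J a \<le> ?J b" using ab by (intro mono_onD[OF J_mono]) auto
  have le: "measure lebesgue (?J ` S) \<le> ?J b - ?J a"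
    using measure_mono_fmeasurable[OF JSsub JSl] Jab by simp
  define Z where "Z = ?J ` (N \<inter> {0..1}) \<union> {?J a, ?J b}"
  have Zneg: "negligible Z"
  proof -
    have "negligible (?J ` (N \<inter> {0..1}))"
      by (rule nprop[OF J_ac J_mono]) (auto intro: negligible_subset[OF Nneg])
    then show ?thesis by (simp add: Z_def)
  qed
  have cover: "{?J a..?J b} \<subseteq> ?J ` S \<union> Z"
  proof
    fix y assume y: "y \<in> {?J a..?J b}"
    have "continuous_on {a..b} ?J" by (rule continuous_on_subset[OF J_cont]) (use ab in auto)
    then obtain x where x: "a \<le> x" "x \<le> b" "?J x = y" using IVT'[of ?J a y b] y ab by auto
    show "y \<in> ?J ` S \<union> Z"
    proof (cases "x = a \<or> x = b \<or> x \<in> N")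
      case True
      then show ?thesis using x ab by (auto simp: Z_def)
    next
      case False
      then have "x \<in> S" using x by (auto simp: S_def)
      then show ?thesis using x by auto
    qed
  qed
  have Zlm: "Z \<in> lmeasurable" using Zneg by (rule negligible_imp_measurable)
  have "?J b - ?J a = measure lebesgue {?J a..?J b}" using Jab by simp
  also have "\<dots> \<le> measure lebesgue (?J ` S \<union> Z)"
    by (rule measure_mono_fmeasurable[OF cover]) (use JSlm Zlm in auto)
  also have "\<dots> \<le> measure lebesgue (?J ` S) + measure lebesgue Z"
    by (rule measure_Un_le) (use JSl Zlm in auto)
  also have "\<dots> = measure lebesgue (?J ` S)" using Zneg by (simp add: negligible_imp_measure0)
  finally have ge: "?J b - ?J a \<le> measure lebesgue (?J ` S)" .
  show ?thesis using absI intI le ge by simp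
qed

end

lemma geom_ge1: "(1::nat) \<le> K \<Longrightarrow> 0 \<le> r \<Longrightarrow> 1 \<le> (\<Sum>i<K. (r::real) ^ i)"
proof -
  assume K: "1 \<le> K" and r: "0 \<le> r"
  have "(\<Sum>i\<in>{0}. r ^ i) \<le> (\<Sum>i<K. r ^ i)"
    using K r by (intro sum_mono2) auto
  then show ?thesis by simp
qed

lemma geom_mono: "0 \<le> r1 \<Longrightarrow> r1 \<le> r2 \<Longrightarrow> (\<Sum>i<K. (r1::real) ^ i) \<le> (\<Sum>i<K. r2 ^ i)"
  by (intro sum_mono power_mono) auto

lemma geom_diff: assumes "2 \<le> K" "0 \<le> r1" "r1 \<le> r2"
  shows "r2 - r1 \<le> (\<Sum>i<K. (r2::real) ^ i) - (\<Sum>i<K. r1 ^ i)"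
proof -
  have "(\<Sum>i<K. r2 ^ i) - (\<Sum>i<K. r1 ^ i) = (\<Sum>i<K. r2 ^ i - r1 ^ i)"
    by (simp add: sum_subtractf)
  also have "(\<Sum>i\<in>{1}. r2 ^ i - r1 ^ i) \<le> \<dots>"
    using assms by (intro sum_mono2) (auto intro!: power_mono)
  finally show ?thesis by simp
qed

context pm begin

lemma W_int:
  assumes w: "continuous_on {0..1} w" and ab: "0 \<le> a" "a \<le> b" "b \<le> 1"
  shows "(\<lambda>v. Jd v * w v) absolutely_integrable_on {a..b}"
proof -
  have wc: "continuous_on {a..b} w" by (rule continuous_on_subset[OF w]) (use ab in auto)
  have "(\<lambda>v. w v * Jd v) absolutely_integrable_on {a..b}"
  proof (rule absolutely_integrable_bounded_measurable_product_real)
    show "w \<in> borel_measurable (lebesgue_on {a..b})"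
      by (rule continuous_imp_measurable_on_sets_lebesgue[OF wc]) simp
    show "{a..b} \<in> sets lebesgue" by simp
    show "bounded (w ` {a..b})" by (rule compact_imp_bounded[OF compact_continuous_image[OF wc compact_Icc]])
    show "Jd absolutely_integrable_on {a..b}" using FTC[OF ab] by blast
  qed
  then show ?thesis by (simp add: mult.commute)
qed

lemma W_lower:
  assumes w: "continuous_on {0..1} w" and ab: "0 \<le> a" "a \<le> b" "b \<le> 1"
    and lo: "\<And>v. v \<in> {a..b} \<Longrightarrow> \<alpha> \<le> w v"
  shows "\<alpha> * (Jfun F f b - Jfun F f a) \<le> integral {a..b} (\<lambda>v. Jd v * w v)"
proof -
  obtain N where Nneg: "negligible N"
    and Nder: "\<And>x. x \<in> {0..1} \<Longrightarrow> x \<notin> N \<Longrightarrow> (Jfun F f has_real_derivative Jd x) (at x)"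
    using Jd_ae by blast
  have w2: "continuous_on {0..1} (\<lambda>v. w v - \<alpha>)" using w by (intro continuous_intros)
  have i1: "(\<lambda>v. Jd v * w v) integrable_on {a..b}" using W_int[OF w ab] by (simp add: absolutely_integrable_on_def)
  have i2: "(\<lambda>v. Jd v * (w v - \<alpha>)) integrable_on {a..b}" using W_int[OF w2 ab] by (simp add: absolutely_integrable_on_def)
  have iJ: "Jd integrable_on {a..b}" using FTC[OF ab] by (simp add: absolutely_integrable_on_def)
  have "0 \<le> integral {a..b} (\<lambda>v. Jd v * (w v - \<alpha>))"
  proof (rule integral_nonneg_ae[OF i2])
    show "negligible (N \<union> {0, 1})" using Nneg by simp
    fix x assume x: "x \<in> {a..b} - (N \<union> {0, 1})"
    then have "0 < x" "x < 1" using ab by auto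
    then have "0 \<le> Jd x" using Nder x by (intro Jd_nonneg) auto
    moreover have "0 \<le> w x - \<alpha>" using lo x by auto
    ultimately show "0 \<le> Jd x * (w x - \<alpha>)" by simp
  qed
  also have "integral {a..b} (\<lambda>v. Jd v * (w v - \<alpha>)) = integral {a..b} (\<lambda>v. Jd v * w v) - integral {a..b} (\<lambda>v. Jd v * \<alpha>)"
    using integral_diff[OF i1 integrable_on_mult_left[OF iJ, of \<alpha>]] by (simp add: algebra_simps)
  also have "integral {a..b} (\<lambda>v. Jd v * \<alpha>) = \<alpha> * (Jfun F f b - Jfun F f a)"
    using FTC[OF ab] by (simp add: integral_mult_left mult.commute)
  finally show ?thesis by simp
qed

lemma W_nonneg:
  assumes w: "continuous_on {0..1} w" and ab: "0 \<le> a" "a \<le> b" "b \<le> 1"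
    and lo: "\<And>v. v \<in> {a..b} \<Longrightarrow> 0 \<le> w v"
  shows "0 \<le> integral {a..b} (\<lambda>v. Jd v * w v)"
  using W_lower[OF w ab, of 0] lo by simp

lemma rho_bounds:
  assumes "v \<in> {0..1}" "0 \<le> lam" "0 < mu"
  shows "0 \<le> rho F lam mu v" "rho F lam mu v \<le> lam / mu"
proof -
  have "0 \<le> 1 - F v" "1 - F v \<le> 1" using F_ge0 F_le1 assms by auto
  then show "0 \<le> rho F lam mu v" "rho F lam mu v \<le> lam / mu"
    using assms by (auto simp: rho_def divide_right_mono mult_left_le)
qed

lemma Ssum_ge1: "v \<in> {0..1} \<Longrightarrow> 0 \<le> lam \<Longrightarrow> 0 < mu \<Longrightarrow> 1 \<le> K \<Longrightarrow> 1 \<le> Ssum F lam mu K v"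
  unfolding Ssum_def using rho_bounds by (intro geom_ge1) auto

lemma Ssum_le: "v \<in> {0..1} \<Longrightarrow> 0 \<le> lam \<Longrightarrow> 0 < mu \<Longrightarrow> Ssum F lam mu K v \<le> (\<Sum>i<K. (lam / mu) ^ i)"
  unfolding Ssum_def using rho_bounds by (intro geom_mono) auto

lemma Ssum_cont: assumes "0 < mu" shows "continuous_on {0..1} (Ssum F lam mu K)"
proof -
  have eq: "Ssum F lam mu K = (\<lambda>v. \<Sum>i<K. (lam * (1 - F v) / mu) ^ i)"
    by (rule ext) (simp add: Ssum_def rho_def)
  show ?thesis unfolding eq by (intro continuous_intros F_cont) (use assms in auto)
qed

lemma invS_cont: "0 \<le> lam \<Longrightarrow> 0 < mu \<Longrightarrow> 1 \<le> K \<Longrightarrow> continuous_on {0..1} (\<lambda>v. 1 / Ssum F lam mu K v)"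
  using Ssum_ge1 by (intro continuous_intros Ssum_cont) fastforce+

end

lemma vhat_down: "vhat F f Jd c lam mu (Suc (Suc k)) < 1 \<Longrightarrow> vhat F f Jd c lam mu (Suc k) < 1"
  by (auto simp: Let_def split: if_splits)

lemma vhat_down_gen: "1 \<le> j \<Longrightarrow> j \<le> k \<Longrightarrow> vhat F f Jd c lam mu k < 1 \<Longrightarrow> vhat F f Jd c lam mu j < 1"
proof (induction k)
  case 0 then show ?case by simp
next
  case (Suc k)
  show ?case
  proof (cases "j = Suc k")
    case True then show ?thesis using Suc by simp
  next
    case False
    then have "j \<le> k" using Suc by simp
    moreover have "1 \<le> k" using Suc False by simp
    then obtain k' where "k = Suc k'" by (cases k) auto
    then have "vhat F f Jd c lam mu k < 1" using vhat_down Suc by simp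
    ultimately show ?thesis using Suc by simp
  qed
qed

lemma Kstar_lt1:
  assumes "1 \<le> k" "k \<le> Kstar F f Jd c lam mu"
  shows "vhat F f Jd c lam mu k < 1"
proof (rule ccontr)
  assume nk: "\<not> vhat F f Jd c lam mu k < 1"
  let ?A = "{k. 1 \<le> k \<and> vhat F f Jd c lam mu k < 1}"
  have "?A \<subseteq> {1..<k}"
  proof
    fix j assume j: "j \<in> ?A"
    have "j < k"
    proof (rule ccontr)
      assume "\<not> j < k"
      then have "k \<le> j" by simp
      then have "vhat F f Jd c lam mu k < 1" using vhat_down_gen[of k j] j assms by auto
      then show False using nk by simp
    qed
    then show "j \<in> {1..<k}" using j by auto
  qed
  then have "card ?A \<le> card {1..<k}" by (intro card_mono) auto
  then have "card ?A < k" using assms by simp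
  then show False using assms by (simp add: Kstar_def)
qed

context pm begin

definition Smax :: "real \<Rightarrow> real \<Rightarrow> nat \<Rightarrow> real" where
  "Smax lam mu K = (\<Sum>i<K. (lam / mu) ^ i)"

lemma Smax_ge1: "0 \<le> lam \<Longrightarrow> 0 < mu \<Longrightarrow> 1 \<le> K \<Longrightarrow> 1 \<le> Smax lam mu K"
  unfolding Smax_def by (intro geom_ge1) auto

lemma h_eq: "(\<lambda>v. Jd v / Ssum F lam mu K v) = (\<lambda>v. Jd v * (1 / Ssum F lam mu K v))"
  by (rule ext) simp

lemma h_int:
  assumes "0 \<le> lam" "0 < mu" "1 \<le> K" "0 \<le> a" "a \<le> b" "b \<le> 1"
  shows "(\<lambda>v. Jd v / Ssum F lam mu K v) integrable_on {a..b}"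
  unfolding h_eq using W_int[OF invS_cont[OF assms(1-3)] assms(4-6)]
  by (simp add: absolutely_integrable_on_def)

lemma h_lower:
  assumes "0 \<le> lam" "0 < mu" "1 \<le> K" "0 \<le> a" "a \<le> b" "b \<le> 1"
  shows "(Jfun F f b - Jfun F f a) / Smax lam mu K \<le> integral {a..b} (\<lambda>v. Jd v / Ssum F lam mu K v)"
proof -
  have "1 / Smax lam mu K * (Jfun F f b - Jfun F f a) \<le> integral {a..b} (\<lambda>v. Jd v * (1 / Ssum F lam mu K v))"
  proof (rule W_lower[OF invS_cont[OF assms(1-3)] assms(4-6)])
    fix v assume v: "v \<in> {a..b}"
    then have v01: "v \<in> {0..1}" using assms by auto
    have "1 \<le> Ssum F lam mu K v" using Ssum_ge1[OF v01 assms(1-3)] .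
    moreover have "Ssum F lam mu K v \<le> Smax lam mu K" using Ssum_le[OF v01 assms(1,2)] by (simp add: Smax_def)
    ultimately show "1 / Smax lam mu K \<le> 1 / Ssum F lam mu K v" by (intro divide_left_mono) auto
  qed
  then show ?thesis unfolding h_eq by simp
qed

lemma h_nonneg:
  assumes "0 \<le> lam" "0 < mu" "1 \<le> K" "0 \<le> a" "a \<le> b" "b \<le> 1"
  shows "0 \<le> integral {a..b} (\<lambda>v. Jd v / Ssum F lam mu K v)"
proof -
  have "0 \<le> Jfun F f b - Jfun F f a" using assms by (auto intro!: mono_onD[OF J_mono])
  moreover have "1 \<le> Smax lam mu K" using Smax_ge1 assms by auto
  ultimately show ?thesis using h_lower[OF assms] by (smt (verit) divide_nonneg_nonneg)
qed

lemma h_split: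
  assumes "0 \<le> lam" "0 < mu" "1 \<le> K" "0 \<le> a" "a \<le> c" "c \<le> b" "b \<le> 1"
  shows "integral {a..c} (\<lambda>v. Jd v / Ssum F lam mu K v) + integral {c..b} (\<lambda>v. Jd v / Ssum F lam mu K v)
       = integral {a..b} (\<lambda>v. Jd v / Ssum F lam mu K v)"
  using assms by (intro Henstock_Kurzweil_Integration.integral_combine h_int) auto

lemma h_strict:
  assumes "0 \<le> lam" "0 < mu" "1 \<le> K" "0 \<le> a" "a \<le> y" "y < x" "x \<le> 1"
  shows "integral {a..y} (\<lambda>v. Jd v / Ssum F lam mu K v) < integral {a..x} (\<lambda>v. Jd v / Ssum F lam mu K v)"
proof -
  have "0 < Jfun F f x - Jfun F f y" using assms J_less[of y x] by auto
  moreover have "1 \<le> Smax lam mu K" using Smax_ge1 assms by auto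
  ultimately have "0 < (Jfun F f x - Jfun F f y) / Smax lam mu K" by simp
  also have "\<dots> \<le> integral {y..x} (\<lambda>v. Jd v / Ssum F lam mu K v)" using assms by (intro h_lower) auto
  finally show ?thesis using h_split[of lam mu K a y x] assms by auto
qed

lemma h_cont:
  assumes "0 \<le> lam" "0 < mu" "1 \<le> K" "0 \<le> a" "a \<le> 1"
  shows "continuous_on {a..1} (\<lambda>x. integral {a..x} (\<lambda>v. Jd v / Ssum F lam mu K v))"
  using assms by (intro indefinite_integral_continuous_1 h_int) auto

lemma V1:
  assumes c: "0 < c" and mu: "0 < mu" and lt: "vhat F f Jd c lam mu (Suc 0) < 1"
  shows "c / mu < 1 \<and> vhat F f Jd c lam mu (Suc 0) \<in> {0..1} \<and> Jfun F f (vhat F f Jd c lam mu (Suc 0)) = c / mu"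
proof -
  have cm: "c / mu < 1" using lt by (auto split: if_splits)
  have ex: "\<exists>x. x \<in> {0..1} \<and> Jfun F f x = c / mu"
  proof -
    have "Jfun F f 0 \<le> c / mu" using J0 c mu by (smt (verit) divide_pos_pos)
    moreover have "c / mu \<le> Jfun F f 1" using J1 cm by simp
    ultimately show ?thesis using IVT'[of "Jfun F f" 0 "c/mu" 1] J_cont by auto
  qed
  have uniq: "\<exists>!x. x \<in> {0..1} \<and> Jfun F f x = c / mu"
    using ex J_less_iff by (metis linorder_neqE_linordered_idom order_less_irrefl)
  have "vhat F f Jd c lam mu (Suc 0) = (THE x. x \<in> {0..1} \<and> Jfun F f x = c / mu)" using cm by simp
  then show ?thesis using theI'[OF uniq] cm by simp
qed

lemma V2:
  assumes c: "0 < c" and lam: "0 \<le> lam" and mu: "0 < mu"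
    and lt: "vhat F f Jd c lam mu (Suc (Suc k)) < 1"
    and a0: "0 \<le> vhat F f Jd c lam mu (Suc k)"
  shows "vhat F f Jd c lam mu (Suc k) < vhat F f Jd c lam mu (Suc (Suc k))
    \<and> mu * integral {vhat F f Jd c lam mu (Suc k)..vhat F f Jd c lam mu (Suc (Suc k))}
          (\<lambda>v. Jd v / Ssum F lam mu (Suc (Suc k)) v) = c"
proof -
  define a where "a = vhat F f Jd c lam mu (Suc k)"
  define h where "h = (\<lambda>v. Jd v / Ssum F lam mu (Suc (Suc k)) v)"
  define G where "G x = mu * integral {a..x} h" for x
  have cond: "a < 1 \<and> mu * integral {a..1} h \<ge> c"
    using lt by (auto simp: Let_def a_def h_def split: if_splits)
  have val: "vhat F f Jd c lam mu (Suc (Suc k)) = (THE x. x \<in> {a<..1} \<and> mu * integral {a..x} h = c)"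
    using cond by (simp add: Let_def a_def h_def)
  have a01: "0 \<le> a" "a < 1" using a0 cond by (auto simp: a_def)
  have Gc: "continuous_on {a..1} G"
    unfolding G_def h_def using a01 lam mu by (intro continuous_intros h_cont) auto
  have Ga: "G a = 0" by (simp add: G_def)
  have G1: "c \<le> G 1" using cond by (simp add: G_def)
  obtain x where x: "a \<le> x" "x \<le> 1" "G x = c"
    using IVT'[of G a c 1] Gc Ga G1 c a01 by auto
  have xa: "x \<noteq> a" using x Ga c by auto
  have Gstrict: "G y < G x'" if "a \<le> y" "y < x'" "x' \<le> 1" for y x'
    unfolding G_def h_def using h_strict[of lam mu "Suc (Suc k)" a y x'] that a01 lam mu
    by (intro mult_strict_left_mono) auto
  have uniq: "\<exists>!x. x \<in> {a<..1} \<and> mu * integral {a..x} h = c"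
  proof (rule ex1I[of _ x])
    show "x \<in> {a<..1} \<and> mu * integral {a..x} h = c" using x xa by (auto simp: G_def)
    fix y assume y: "y \<in> {a<..1} \<and> mu * integral {a..y} h = c"
    show "y = x"
    proof (rule ccontr)
      assume "y \<noteq> x"
      then consider "y < x" | "x < y" by linarith
      then show False
      proof cases
        case 1 then have "G y < G x" using y x by (intro Gstrict) auto
        then show False using y x by (simp add: G_def)
      next
        case 2 then have "G x < G y" using y x by (intro Gstrict) auto
        then show False using y x by (simp add: G_def)
      qed
    qed
  qed
  from theI'[OF uniq] val show ?thesis by (simp add: a_def h_def)
qed

lemma V0:
  assumes c: "0 < c" and lam: "0 \<le> lam" and mu: "0 < mu"
  shows "vhat F f Jd c lam mu (Suc k) < 1 \<Longrightarrow> 0 \<le> vhat F f Jd c lam mu (Suc k)"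
proof (induction k)
  case 0
  have "vhat F f Jd c lam mu (Suc 0) \<in> {0..1}" using V1[OF c mu 0] by blast
  then show ?case by simp
next
  case (Suc k)
  have "vhat F f Jd c lam mu (Suc k) < 1" using vhat_down[OF Suc.prems] .
  then have h0: "0 \<le> vhat F f Jd c lam mu (Suc k)" using Suc.IH by blast
  have "vhat F f Jd c lam mu (Suc k) < vhat F f Jd c lam mu (Suc (Suc k))"
    using conjunct1[OF V2[OF c lam mu Suc.prems h0]] .
  then show ?case using h0 by linarith
qed

end

context pm begin

lemma MC:
  assumes lam: "0 < lam" and mu: "0 < mu" and c1: "0 < c1" and c12: "c1 < c2"
  shows "vhat F f Jd c1 lam mu (Suc k) < 1 \<Longrightarrow> vhat F f Jd c2 lam mu (Suc k) < 1
    \<Longrightarrow> vhat F f Jd c1 lam mu (Suc k) < vhat F f Jd c2 lam mu (Suc k)"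
proof (induction k)
  case 0
  have c2: "0 < c2" using c1 c12 by simp
  have A: "vhat F f Jd c1 lam mu (Suc 0) \<in> {0..1}" "Jfun F f (vhat F f Jd c1 lam mu (Suc 0)) = c1 / mu"
    using V1[OF c1 mu 0(1)] by auto
  have B: "vhat F f Jd c2 lam mu (Suc 0) \<in> {0..1}" "Jfun F f (vhat F f Jd c2 lam mu (Suc 0)) = c2 / mu"
    using V1[OF c2 mu 0(2)] by auto
  have "c1 / mu < c2 / mu" using c12 mu by (simp add: divide_strict_right_mono)
  then show ?case using J_less_iff[OF A(1) B(1)] A(2) B(2) by simp
next
  case (Suc k)
  have c2: "0 < c2" using c1 c12 by simp
  let ?a1 = "vhat F f Jd c1 lam mu (Suc k)" and ?a2 = "vhat F f Jd c2 lam mu (Suc k)"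
  define x1 where "x1 = vhat F f Jd c1 lam mu (Suc (Suc k))"
  define x2 where "x2 = vhat F f Jd c2 lam mu (Suc (Suc k))"
  have x1l: "x1 < 1" using Suc.prems(1) unfolding x1_def .
  have x2l: "x2 < 1" using Suc.prems(2) unfolding x2_def .
  let ?H = "\<lambda>v. Jd v / Ssum F lam mu (Suc (Suc k)) v"
  have a1l: "?a1 < 1" using vhat_down[OF Suc.prems(1)] .
  have a2l: "?a2 < 1" using vhat_down[OF Suc.prems(2)] .
  have a12: "?a1 < ?a2" using Suc.IH a1l a2l by blast
  have a10: "0 \<le> ?a1" using V0[OF c1 _ mu a1l] lam by simp
  have a20: "0 \<le> ?a2" using V0[OF c2 _ mu a2l] lam by simp
  have l: "0 \<le> lam" using lam by simp
  have X1: "?a1 < x1" "mu * integral {?a1..x1} ?H = c1"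
    using V2[OF c1 l mu Suc.prems(1) a10] unfolding x1_def by blast+
  have X2: "?a2 < x2" "mu * integral {?a2..x2} ?H = c2"
    using V2[OF c2 l mu Suc.prems(2) a20] unfolding x2_def by blast+
  have "x1 < x2"
  proof (rule ccontr)
    assume "\<not> x1 < x2"
    then have x21: "x2 \<le> x1" by simp
    have s1: "integral {?a1..?a2} ?H + integral {?a2..x1} ?H = integral {?a1..x1} ?H"
      using a10 a12 X2 x21 x1l by (intro h_split[OF l mu]) auto
    have s2: "integral {?a2..x2} ?H + integral {x2..x1} ?H = integral {?a2..x1} ?H"
      using a20 X2 x21 x1l by (intro h_split[OF l mu]) auto
    have n1: "0 \<le> integral {?a1..?a2} ?H" using a10 a12 a2l by (intro h_nonneg[OF l mu]) auto
    have n2: "0 \<le> integral {x2..x1} ?H" using a20 X2 x21 x1l by (intro h_nonneg[OF l mu]) auto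
    have "integral {?a2..x2} ?H \<le> integral {?a1..x1} ?H" using s1 s2 n1 n2 by linarith
    then have "mu * integral {?a2..x2} ?H \<le> mu * integral {?a1..x1} ?H" using mu by simp
    then show False using X1 X2 c12 by linarith
  qed
  then show ?case unfolding x1_def x2_def .
qed

lemma h_compare:
  assumes l1: "0 \<le> lam1" and m1: "0 < mu1" and l2: "0 \<le> lam2" and m2: "0 < mu2" and K: "1 \<le> K"
    and ab: "0 \<le> a" "a \<le> b" "b \<le> 1"
    and le: "\<And>v. v \<in> {a..b} \<Longrightarrow> Ssum F lam2 mu2 K v \<le> Ssum F lam1 mu1 K v"
  shows "integral {a..b} (\<lambda>v. Jd v / Ssum F lam1 mu1 K v) \<le> integral {a..b} (\<lambda>v. Jd v / Ssum F lam2 mu2 K v)"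
proof -
  let ?w1 = "\<lambda>v. 1 / Ssum F lam1 mu1 K v" and ?w2 = "\<lambda>v. 1 / Ssum F lam2 mu2 K v"
  have c1: "continuous_on {0..1} ?w1" by (rule invS_cont[OF l1 m1 K])
  have c2: "continuous_on {0..1} ?w2" by (rule invS_cont[OF l2 m2 K])
  have cw: "continuous_on {0..1} (\<lambda>v. ?w2 v - ?w1 v)" by (rule continuous_on_diff[OF c2 c1])
  have "0 \<le> integral {a..b} (\<lambda>v. Jd v * (?w2 v - ?w1 v))"
  proof (rule W_nonneg[OF cw ab])
    fix v assume v: "v \<in> {a..b}"
    then have v01: "v \<in> {0..1}" using ab by auto
    have "1 \<le> Ssum F lam2 mu2 K v" using Ssum_ge1[OF v01 l2 m2 K] .
    then show "0 \<le> ?w2 v - ?w1 v" using le[OF v] by (simp add: frac_le)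
  qed
  also have "integral {a..b} (\<lambda>v. Jd v * (?w2 v - ?w1 v)) = integral {a..b} (\<lambda>v. Jd v * ?w2 v) - integral {a..b} (\<lambda>v. Jd v * ?w1 v)"
  proof -
    have i1: "(\<lambda>v. Jd v * ?w1 v) integrable_on {a..b}" using W_int[OF c1 ab] by (simp add: absolutely_integrable_on_def)
    have i2: "(\<lambda>v. Jd v * ?w2 v) integrable_on {a..b}" using W_int[OF c2 ab] by (simp add: absolutely_integrable_on_def)
    show ?thesis using integral_diff[OF i2 i1] by (simp add: algebra_simps)
  qed
  finally show ?thesis by simp
qed

lemma MMu:
  assumes lam: "0 < lam" and c: "0 < c" and mu1: "0 < mu1" and mu12: "mu1 < mu2"
  shows "vhat F f Jd c lam mu1 (Suc k) < 1 \<Longrightarrow> vhat F f Jd c lam mu2 (Suc k) < 1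
    \<Longrightarrow> vhat F f Jd c lam mu2 (Suc k) < vhat F f Jd c lam mu1 (Suc k)"
proof (induction k)
  case 0
  have mu2: "0 < mu2" using mu1 mu12 by simp
  have A: "vhat F f Jd c lam mu1 (Suc 0) \<in> {0..1}" "Jfun F f (vhat F f Jd c lam mu1 (Suc 0)) = c / mu1"
    using V1[OF c mu1 0(1)] by auto
  have B: "vhat F f Jd c lam mu2 (Suc 0) \<in> {0..1}" "Jfun F f (vhat F f Jd c lam mu2 (Suc 0)) = c / mu2"
    using V1[OF c mu2 0(2)] by auto
  have "c / mu2 < c / mu1" using c mu1 mu12 by (simp add: divide_strict_left_mono)
  then show ?case using J_less_iff[OF B(1) A(1)] A(2) B(2) by simp
next
  case (Suc k)
  have mu2: "0 < mu2" using mu1 mu12 by simp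
  have l: "0 \<le> lam" using lam by simp
  let ?a1 = "vhat F f Jd c lam mu1 (Suc k)" and ?a2 = "vhat F f Jd c lam mu2 (Suc k)"
  define x1 where "x1 = vhat F f Jd c lam mu1 (Suc (Suc k))"
  define x2 where "x2 = vhat F f Jd c lam mu2 (Suc (Suc k))"
  have x1l: "x1 < 1" using Suc.prems(1) unfolding x1_def .
  have x2l: "x2 < 1" using Suc.prems(2) unfolding x2_def .
  let ?H1 = "\<lambda>v. Jd v / Ssum F lam mu1 (Suc (Suc k)) v"
  let ?H2 = "\<lambda>v. Jd v / Ssum F lam mu2 (Suc (Suc k)) v"
  have a1l: "?a1 < 1" using vhat_down[OF Suc.prems(1)] .
  have a2l: "?a2 < 1" using vhat_down[OF Suc.prems(2)] .
  have a21: "?a2 < ?a1" using Suc.IH a1l a2l by blast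
  have a10: "0 \<le> ?a1" using V0[OF c l mu1 a1l] by simp
  have a20: "0 \<le> ?a2" using V0[OF c l mu2 a2l] by simp
  have X1: "?a1 < x1" "mu1 * integral {?a1..x1} ?H1 = c"
    using V2[OF c l mu1 Suc.prems(1) a10] unfolding x1_def by blast+
  have X2: "?a2 < x2" "mu2 * integral {?a2..x2} ?H2 = c"
    using V2[OF c l mu2 Suc.prems(2) a20] unfolding x2_def by blast+
  have "x2 < x1"
  proof (rule ccontr)
    assume "\<not> x2 < x1"
    then have x12: "x1 \<le> x2" by simp
    have cmp: "integral {?a1..x1} ?H1 \<le> integral {?a1..x1} ?H2"
    proof (rule h_compare[OF l mu1 l mu2])
      fix v assume v: "v \<in> {?a1..x1}"
      then have v01: "v \<in> {0..1}" using a10 x1l by auto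
      have "rho F lam mu2 v \<le> rho F lam mu1 v"
        using F_le1[OF v01] l mu1 mu12 unfolding rho_def by (intro divide_left_mono) (auto intro: mult_nonneg_nonneg)
      then show "Ssum F lam mu2 (Suc (Suc k)) v \<le> Ssum F lam mu1 (Suc (Suc k)) v"
        unfolding Ssum_def using rho_bounds[OF v01 l mu2] by (intro geom_mono) auto
    qed (use a10 X1 x1l in auto)
    have s1: "integral {?a2..?a1} ?H2 + integral {?a1..x2} ?H2 = integral {?a2..x2} ?H2"
      using a20 a21 X1 x12 x2l by (intro h_split[OF l mu2]) auto
    have s2: "integral {?a1..x1} ?H2 + integral {x1..x2} ?H2 = integral {?a1..x2} ?H2"
      using a10 X1 x12 x2l by (intro h_split[OF l mu2]) auto
    have n1: "0 \<le> integral {?a2..?a1} ?H2" using a20 a21 a1l by (intro h_nonneg[OF l mu2]) auto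
    have n2: "0 \<le> integral {x1..x2} ?H2" using a10 X1 x12 x2l by (intro h_nonneg[OF l mu2]) auto
    have "integral {?a1..x1} ?H1 \<le> integral {?a2..x2} ?H2" using cmp s1 s2 n1 n2 by linarith
    moreover have "integral {?a1..x1} ?H1 = c / mu1" using X1 mu1 by (simp add: field_simps)
    moreover have "integral {?a2..x2} ?H2 = c / mu2" using X2 mu2 by (simp add: field_simps)
    moreover have "c / mu2 < c / mu1" using c mu1 mu12 by (simp add: divide_strict_left_mono)
    ultimately show False by linarith
  qed
  then show ?case unfolding x1_def x2_def .
qed

end

context pm begin

lemma F_mono_le: "0 \<le> v \<Longrightarrow> v \<le> x \<Longrightarrow> x \<le> 1 \<Longrightarrow> F v \<le> F x"
  using F_strict[of v x] by (cases "v = x") auto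

lemma step_lam:
  assumes c: "0 < c" and mu: "0 < mu" and l1: "0 < lam1" and l12: "lam1 < lam2"
    and a10: "0 \<le> a1" and a12: "a1 \<le> a2" and X1: "a1 < x1" "x1 < 1" and X2: "a2 < x2" "x2 < 1"
    and E1: "mu * integral {a1..x1} (\<lambda>v. Jd v / Ssum F lam1 mu (Suc (Suc k)) v) = c"
    and E2: "mu * integral {a2..x2} (\<lambda>v. Jd v / Ssum F lam2 mu (Suc (Suc k)) v) = c"
  shows "x1 < x2"
proof (rule ccontr)
  assume "\<not> x1 < x2"
  then have x21: "x2 \<le> x1" by simp
  let ?K = "Suc (Suc k)"
  let ?H1 = "\<lambda>v. Jd v / Ssum F lam1 mu ?K v" and ?H2 = "\<lambda>v. Jd v / Ssum F lam2 mu ?K v"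
  have l1': "0 \<le> lam1" and l2': "0 \<le> lam2" using l1 l12 by auto
  have K1: "1 \<le> ?K" by simp
  have s1: "integral {a1..a2} ?H2 + integral {a2..x1} ?H2 = integral {a1..x1} ?H2"
    using a10 a12 X2 x21 X1 by (intro h_split[OF l2' mu]) auto
  have s2: "integral {a2..x2} ?H2 + integral {x2..x1} ?H2 = integral {a2..x1} ?H2"
    using a10 a12 X2 x21 X1 by (intro h_split[OF l2' mu]) auto
  have n1: "0 \<le> integral {a1..a2} ?H2" using a10 a12 X2 by (intro h_nonneg[OF l2' mu]) auto
  have n2: "0 \<le> integral {x2..x1} ?H2" using a10 a12 X2 x21 X1 by (intro h_nonneg[OF l2' mu]) auto
  have i1: "integral {a2..x2} ?H2 \<le> integral {a1..x1} ?H2" using s1 s2 n1 n2 by linarith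
  define Sm where "Sm = Smax lam2 mu ?K"
  define \<delta> where "\<delta> = (lam2 - lam1) * (1 - F x1) / mu"
  have \<delta>0: "0 < \<delta>" using F_lt1[of x1] a10 X1 l12 mu by (simp add: \<delta>_def)
  have Sm1: "1 \<le> Sm" using Smax_ge1[OF l2' mu K1] by (simp add: Sm_def)
  let ?w1 = "\<lambda>v. 1 / Ssum F lam1 mu ?K v" and ?w2 = "\<lambda>v. 1 / Ssum F lam2 mu ?K v"
  have c1: "continuous_on {0..1} ?w1" by (rule invS_cont[OF l1' mu K1])
  have c2: "continuous_on {0..1} ?w2" by (rule invS_cont[OF l2' mu K1])
  have cw: "continuous_on {0..1} (\<lambda>v. ?w1 v - ?w2 v)" by (rule continuous_on_diff[OF c1 c2])
  have ab: "0 \<le> a1" "a1 \<le> x1" "x1 \<le> 1" using a10 X1 by auto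
  have low: "\<delta> / (Sm * Sm) * (Jfun F f x1 - Jfun F f a1) \<le> integral {a1..x1} (\<lambda>v. Jd v * (?w1 v - ?w2 v))"
  proof (rule W_lower[OF cw ab])
    fix v assume v: "v \<in> {a1..x1}"
    then have v01: "v \<in> {0..1}" using ab by auto
    define S1 where "S1 = Ssum F lam1 mu ?K v"
    define S2 where "S2 = Ssum F lam2 mu ?K v"
    have r1: "0 \<le> rho F lam1 mu v" using rho_bounds[OF v01 l1' mu] by simp
    have rle: "rho F lam1 mu v \<le> rho F lam2 mu v"
      unfolding rho_def using F_le1[OF v01] l12 mu by (intro divide_right_mono mult_right_mono) auto
    have "rho F lam2 mu v - rho F lam1 mu v = (lam2 - lam1) * (1 - F v) / mu"
      unfolding rho_def using mu by (simp add: field_simps)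
    also have "\<dots> \<ge> \<delta>"
      unfolding \<delta>_def using F_mono_le[of v x1] v ab l12 mu
      by (intro divide_right_mono mult_left_mono) auto
    finally have "\<delta> \<le> rho F lam2 mu v - rho F lam1 mu v" .
    also have "\<dots> \<le> S2 - S1"
      unfolding S1_def S2_def Ssum_def by (rule geom_diff[OF _ r1 rle]) simp
    finally have dS: "\<delta> \<le> S2 - S1" .
    have S11: "1 \<le> S1" using Ssum_ge1[OF v01 l1' mu K1] by (simp add: S1_def)
    have S21: "1 \<le> S2" using Ssum_ge1[OF v01 l2' mu K1] by (simp add: S2_def)
    have S2m: "S2 \<le> Sm" unfolding S2_def Sm_def Smax_def by (rule Ssum_le[OF v01 l2' mu])
    have S12: "S1 \<le> S2" using dS \<delta>0 by simp
    have "?w1 v - ?w2 v = (S2 - S1) / (S1 * S2)" using S11 S21 by (simp add: S1_def S2_def field_simps)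
    also have "\<dots> \<ge> \<delta> / (S1 * S2)" using dS S11 S21 by (intro divide_right_mono) auto
    also have "\<delta> / (S1 * S2) \<ge> \<delta> / (Sm * Sm)"
      using \<delta>0 S11 S21 S12 S2m by (intro divide_left_mono mult_mono) auto
    finally show "\<delta> / (Sm * Sm) \<le> ?w1 v - ?w2 v" .
  qed
  have "0 < \<delta> / (Sm * Sm) * (Jfun F f x1 - Jfun F f a1)"
    using \<delta>0 Sm1 J_less[of a1 x1] ab X1 by (intro mult_pos_pos) auto
  also note low
  also have "integral {a1..x1} (\<lambda>v. Jd v * (?w1 v - ?w2 v)) = integral {a1..x1} ?H1 - integral {a1..x1} ?H2"
  proof -
    have i1: "(\<lambda>v. Jd v * ?w1 v) integrable_on {a1..x1}" using W_int[OF c1 ab] by (simp add: absolutely_integrable_on_def)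
    have i2: "(\<lambda>v. Jd v * ?w2 v) integrable_on {a1..x1}" using W_int[OF c2 ab] by (simp add: absolutely_integrable_on_def)
    show ?thesis using integral_diff[OF i1 i2] by (simp add: algebra_simps)
  qed
  finally have "integral {a1..x1} ?H2 < integral {a1..x1} ?H1" by simp
  with i1 have "integral {a2..x2} ?H2 < integral {a1..x1} ?H1" by linarith
  then have "mu * integral {a2..x2} ?H2 < mu * integral {a1..x1} ?H1" using mu by simp
  then show False using E1 E2 by simp
qed

lemma lam_step_full:
  assumes c: "0 < c" and mu: "0 < mu" and l1: "0 < lam1" and l12: "lam1 < lam2"
    and p1: "vhat F f Jd c lam1 mu (Suc (Suc k)) < 1" and p2: "vhat F f Jd c lam2 mu (Suc (Suc k)) < 1"
    and a12: "vhat F f Jd c lam1 mu (Suc k) \<le> vhat F f Jd c lam2 mu (Suc k)"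
  shows "vhat F f Jd c lam1 mu (Suc (Suc k)) < vhat F f Jd c lam2 mu (Suc (Suc k))"
proof -
  have l1': "0 \<le> lam1" and l2': "0 \<le> lam2" using l1 l12 by auto
  define x1 where "x1 = vhat F f Jd c lam1 mu (Suc (Suc k))"
  define x2 where "x2 = vhat F f Jd c lam2 mu (Suc (Suc k))"
  have x1l: "x1 < 1" using p1 unfolding x1_def .
  have x2l: "x2 < 1" using p2 unfolding x2_def .
  let ?a1 = "vhat F f Jd c lam1 mu (Suc k)" and ?a2 = "vhat F f Jd c lam2 mu (Suc k)"
  have a1l: "?a1 < 1" using vhat_down[OF p1] .
  have a2l: "?a2 < 1" using vhat_down[OF p2] .
  have a10: "0 \<le> ?a1" using V0[OF c l1' mu a1l] by simp
  have a20: "0 \<le> ?a2" using V0[OF c l2' mu a2l] by simp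
  have X1: "?a1 < x1" "mu * integral {?a1..x1} (\<lambda>v. Jd v / Ssum F lam1 mu (Suc (Suc k)) v) = c"
    using V2[OF c l1' mu p1 a10] unfolding x1_def by blast+
  have X2: "?a2 < x2" "mu * integral {?a2..x2} (\<lambda>v. Jd v / Ssum F lam2 mu (Suc (Suc k)) v) = c"
    using V2[OF c l2' mu p2 a20] unfolding x2_def by blast+
  have "x1 < x2" by (rule step_lam[OF c mu l1 l12 a10 a12 X1(1) x1l X2(1) x2l X1(2) X2(2)])
  then show ?thesis unfolding x1_def x2_def .
qed

lemma lam_le:
  assumes c: "0 < c" and mu: "0 < mu" and l1: "0 < lam1" and l12: "lam1 < lam2"
  shows "vhat F f Jd c lam1 mu (Suc k) < 1 \<Longrightarrow> vhat F f Jd c lam2 mu (Suc k) < 1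
    \<Longrightarrow> vhat F f Jd c lam1 mu (Suc k) \<le> vhat F f Jd c lam2 mu (Suc k)"
proof (induction k)
  case 0 then show ?case by simp
next
  case (Suc k)
  have "vhat F f Jd c lam1 mu (Suc k) \<le> vhat F f Jd c lam2 mu (Suc k)"
    using Suc.IH vhat_down[OF Suc.prems(1)] vhat_down[OF Suc.prems(2)] by blast
  then show ?case using lam_step_full[OF c mu l1 l12 Suc.prems] by simp
qed

end

theorem proposition1:
  fixes F f Jd :: "real \<Rightarrow> real"
  assumes F0: "F 0 = 0" and F1: "F 1 = 1"
    and dens: "\<forall>x\<in>{0..1}. (F has_real_derivative f x) (at x within {0..1})"
    and fpos: "\<forall>x\<in>{0..1}. f x > 0"
    and fac: "abs_continuous_on_interval 0 1 f"
    and Jmono: "strict_mono_on {0..1} (Jfun F f)"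
    and J0: "Jfun F f 0 < 0"
    and Jd: "AE x in lborel. x \<in> {0..1} \<longrightarrow> (Jfun F f has_real_derivative Jd x) (at x)"
  shows
    "(\<forall>k\<ge>2. \<forall>lam mu c1 c2. lam > 0 \<and> mu > 0 \<and> 0 < c1 \<and> c1 < c2
          \<and> k \<le> Kstar F f Jd c1 lam mu \<and> k \<le> Kstar F f Jd c2 lam mu
          \<longrightarrow> vhat F f Jd c1 lam mu k < vhat F f Jd c2 lam mu k)
   \<and> (\<forall>k\<ge>2. \<forall>c mu lam1 lam2. c > 0 \<and> mu > 0 \<and> 0 < lam1 \<and> lam1 < lam2
          \<and> k \<le> Kstar F f Jd c lam1 mu \<and> k \<le> Kstar F f Jd c lam2 mu
          \<longrightarrow> vhat F f Jd c lam1 mu k < vhat F f Jd c lam2 mu k)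
   \<and> (\<forall>k\<ge>2. \<forall>c lam mu1 mu2. c > 0 \<and> lam > 0 \<and> 0 < mu1 \<and> mu1 < mu2
          \<and> k \<le> Kstar F f Jd c lam mu1 \<and> k \<le> Kstar F f Jd c lam mu2
          \<longrightarrow> vhat F f Jd c lam mu1 k > vhat F f Jd c lam mu2 k)
   \<and> (\<forall>lam mu c1 c2. lam > 0 \<and> mu > 0 \<and> 0 < c1 \<and> c1 < c2
          \<and> 1 \<le> Kstar F f Jd c1 lam mu \<and> 1 \<le> Kstar F f Jd c2 lam mu
          \<longrightarrow> vhat F f Jd c1 lam mu 1 < vhat F f Jd c2 lam mu 1)
   \<and> (\<forall>c lam mu1 mu2. c > 0 \<and> lam > 0 \<and> 0 < mu1 \<and> mu1 < mu2
          \<and> 1 \<le> Kstar F f Jd c lam mu1 \<and> 1 \<le> Kstar F f Jd c lam mu2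
          \<longrightarrow> vhat F f Jd c lam mu1 1 > vhat F f Jd c lam mu2 1)
   \<and> (\<forall>c mu lam1 lam2. c > 0 \<and> mu > 0 \<and> lam1 > 0 \<and> lam2 > 0
          \<and> 1 \<le> Kstar F f Jd c lam1 mu \<and> 1 \<le> Kstar F f Jd c lam2 mu
          \<longrightarrow> vhat F f Jd c lam1 mu 1 = vhat F f Jd c lam2 mu 1)"
proof -
  interpret pm F f Jd
    using F0 F1 dens fpos fac Jmono J0 Jd by (simp add: pm_def)
  have P1: "vhat F f Jd c1 lam mu k < vhat F f Jd c2 lam mu k"
    if "1 \<le> k" "lam > 0" "mu > 0" "0 < c1" "c1 < c2" "k \<le> Kstar F f Jd c1 lam mu" "k \<le> Kstar F f Jd c2 lam mu"
    for k lam mu c1 c2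
  proof -
    define k' where "k' = k - 1"
    have k: "k = Suc k'" using that(1) by (simp add: k'_def)
    have "vhat F f Jd c1 lam mu k < 1" "vhat F f Jd c2 lam mu k < 1"
      using Kstar_lt1 that by blast+
    then show ?thesis using MC[OF that(2-5), of k'] k by simp
  qed
  have P3: "vhat F f Jd c lam mu2 k < vhat F f Jd c lam mu1 k"
    if "1 \<le> k" "c > 0" "lam > 0" "0 < mu1" "mu1 < mu2" "k \<le> Kstar F f Jd c lam mu1" "k \<le> Kstar F f Jd c lam mu2"
    for k lam c mu1 mu2
  proof -
    define k' where "k' = k - 1"
    have k: "k = Suc k'" using that(1) by (simp add: k'_def)
    have "vhat F f Jd c lam mu1 k < 1" "vhat F f Jd c lam mu2 k < 1"
      using Kstar_lt1 that by blast+
    then show ?thesis using MMu[OF that(3,2,4,5), of k'] k by simp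
  qed
  have P2: "vhat F f Jd c lam1 mu k < vhat F f Jd c lam2 mu k"
    if "2 \<le> k" "c > 0" "mu > 0" "0 < lam1" "lam1 < lam2" "k \<le> Kstar F f Jd c lam1 mu" "k \<le> Kstar F f Jd c lam2 mu"
    for k c mu lam1 lam2
  proof -
    define k' where "k' = k - 2"
    have k: "k = Suc (Suc k')" using that(1) by (simp add: k'_def)
    have q1: "vhat F f Jd c lam1 mu k < 1" using that(1,6) by (intro Kstar_lt1) auto
    have q2: "vhat F f Jd c lam2 mu k < 1" using that(1,7) by (intro Kstar_lt1) auto
    have p1: "vhat F f Jd c lam1 mu (Suc (Suc k')) < 1" by (subst k[symmetric]) (rule q1)
    have p2: "vhat F f Jd c lam2 mu (Suc (Suc k')) < 1" by (subst k[symmetric]) (rule q2)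
    have "vhat F f Jd c lam1 mu (Suc k') \<le> vhat F f Jd c lam2 mu (Suc k')"
      using lam_le[OF that(2-5)] vhat_down[OF p1] vhat_down[OF p2] by blast
    then show ?thesis unfolding k by (rule lam_step_full[OF that(2-5) p1 p2])
  qed
  show ?thesis
  proof (intro conjI allI impI)
    show "vhat F f Jd c1 lam mu k < vhat F f Jd c2 lam mu k"
      if "2 \<le> k" "0 < lam \<and> 0 < mu \<and> 0 < c1 \<and> c1 < c2 \<and> k \<le> Kstar F f Jd c1 lam mu \<and> k \<le> Kstar F f Jd c2 lam mu"
      for k lam mu c1 c2 using P1[of k lam mu c1 c2] that by auto
    show "vhat F f Jd c lam1 mu k < vhat F f Jd c lam2 mu k"
      if "2 \<le> k" "0 < c \<and> 0 < mu \<and> 0 < lam1 \<and> lam1 < lam2 \<and> k \<le> Kstar F f Jd c lam1 mu \<and> k \<le> Kstar F f Jd c lam2 mu"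
      for k c mu lam1 lam2 using P2[of k c mu lam1 lam2] that by auto
    show "vhat F f Jd c lam mu2 k < vhat F f Jd c lam mu1 k"
      if "2 \<le> k" "0 < c \<and> 0 < lam \<and> 0 < mu1 \<and> mu1 < mu2 \<and> k \<le> Kstar F f Jd c lam mu1 \<and> k \<le> Kstar F f Jd c lam mu2"
      for k c lam mu1 mu2 using P3[of k c lam mu1 mu2] that by auto
    show "vhat F f Jd c1 lam mu 1 < vhat F f Jd c2 lam mu 1"
      if "0 < lam \<and> 0 < mu \<and> 0 < c1 \<and> c1 < c2 \<and> 1 \<le> Kstar F f Jd c1 lam mu \<and> 1 \<le> Kstar F f Jd c2 lam mu"
      for lam mu c1 c2 using P1[of 1 lam mu c1 c2] that by auto
    show "vhat F f Jd c lam mu2 1 < vhat F f Jd c lam mu1 1"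
      if "0 < c \<and> 0 < lam \<and> 0 < mu1 \<and> mu1 < mu2 \<and> 1 \<le> Kstar F f Jd c lam mu1 \<and> 1 \<le> Kstar F f Jd c lam mu2"
      for c lam mu1 mu2 using P3[of 1 c lam mu1 mu2] that by auto
    show "vhat F f Jd c lam1 mu 1 = vhat F f Jd c lam2 mu 1" for c mu lam1 lam2
      by (simp add: One_nat_def)
  qed
qed

end
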